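(* Let $S \in \mathbb{Z}^{m\times m}$ be nonsingular, $F \in \mathbb{Z}^{n\times m}$, and let $H\in\mathbb{Z}^{n\times n}$ be the Hermite basis of $\mathcal{R}(S,F)$. Let $n = n_1+n_2$ with $n_1,n_2\ge 0$, write $H = \begin{bmatrix} \bar H_1 & H_{12} \\ 0 & \bar H_2\end{bmatrix}$ with $\bar H_1 \in \mathbb{Z}^{n_1\times n_1}$, and set $H_1 = \mathrm{diag}(\bar H_1, I_{n_2})$, $H_2 = \begin{bmatrix} I_{n_1} & H_{12}\\ 0 & \bar H_2\end{bmatrix}$. Let $A$ be the last $n_2$ rows of $F$ and let $T\in\mathbb{Z}^{m\times m}$ be the Hermite basis of $\begin{bmatrix} S\\ A\end{bmatrix}$. Then: (1) $H_2$ is the Hermite basis of $\mathcal{R}(S, H_1F)$; (2) the Hermite basis of $\begin{bmatrix} S \\ H_1F\end{bmatrix}$ is equal to $T$.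
   Context: For an integer matrix $A$, $\mathcal{L}(A)$ denotes the lattice of all $\mathbb{Z}$-linear combinations of the rows of $A$. For $M \in \mathbb{Z}^{\ell \times m}$ of full column rank and $F \in \mathbb{Z}^{n \times m}$, the integer relations lattice is $\mathcal{R}(M,F) := \{p \in \mathbb{Z}^{1\times n} : pF \in \mathcal{L}(M)\}$; its Hermite basis is the unique nonsingular $H\in\mathbb{Z}^{n\times n}$ in Hermite form with $\mathcal{L}(H)=\mathcal{R}(M,F)$. A nonsingular square integer matrix is in Hermite form if it is upper triangular with positive diagonal entries $h_j$ and each entry above the diagonal in column $j$ lies in $[0,h_j)$. The Hermite basis of a full column rank integer matrix $B$ with $m$ columns is the unique $m\times m$ matrix in Hermite form whose row lattice equals $\mathcal{L}(B)$. *)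

theory Defs
  imports "Jordan_Normal_Form.Determinant"
begin

definition row_lattice :: "int mat \<Rightarrow> int vec set" where
  "row_lattice A = {transpose_mat A *\<^sub>v c | c. c \<in> carrier_vec (dim_row A)}"

definition relations_lattice :: "int mat \<Rightarrow> int mat \<Rightarrow> int vec set" where
  "relations_lattice M F =
     {p \<in> carrier_vec (dim_row F). transpose_mat F *\<^sub>v p \<in> row_lattice M}"

definition hermite_form :: "int mat \<Rightarrow> bool" where
  "hermite_form H \<longleftrightarrow>
     dim_row H = dim_col H \<and> upper_triangular H \<and>
     (\<forall>j < dim_row H. H $$ (j,j) > 0) \<and>
     (\<forall>i j. i < j \<longrightarrow> j < dim_row H \<longrightarrow> 0 \<le> H $$ (i,j) \<and> H $$ (i,j) < H $$ (j,j))"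

definition hermite_basis_of_relations :: "int mat \<Rightarrow> int mat \<Rightarrow> int mat \<Rightarrow> bool" where
  "hermite_basis_of_relations H M F \<longleftrightarrow>
     H \<in> carrier_mat (dim_row F) (dim_row F) \<and> hermite_form H \<and>
     row_lattice H = relations_lattice M F"

definition hermite_basis_of :: "int mat \<Rightarrow> int mat \<Rightarrow> bool" where
  "hermite_basis_of H B \<longleftrightarrow>
     H \<in> carrier_mat (dim_col B) (dim_col B) \<and> hermite_form H \<and>
     row_lattice H = row_lattice B"

end

theory Submission
  imports Defs
begin

lemma rl_iff: "x \<in> row_lattice A \<longleftrightarrow> (\<exists>c \<in> carrier_vec (dim_row A). x = transpose_mat A *\<^sub>v c)"
  by (auto simp: row_lattice_def)

lemma tr_append_rows_mult:
  assumes A: "A \<in> carrier_mat r1 k" and B: "B \<in> carrier_mat r2 k"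
    and a: "a \<in> carrier_vec r1" and b: "b \<in> carrier_vec r2"
  shows "transpose_mat (A @\<^sub>r B) *\<^sub>v (a @\<^sub>v b) = transpose_mat A *\<^sub>v a + transpose_mat B *\<^sub>v b"
proof (rule eq_vecI)
  show "dim_vec (transpose_mat (A @\<^sub>r B) *\<^sub>v (a @\<^sub>v b)) = dim_vec (transpose_mat A *\<^sub>v a + transpose_mat B *\<^sub>v b)"
    using A B by (simp add: append_rows_def)
  fix j assume "j < dim_vec (transpose_mat A *\<^sub>v a + transpose_mat B *\<^sub>v b)"
  hence j: "j < k" using B by simp
  have "col (A @\<^sub>r B) j = col A j @\<^sub>v col B j"
    unfolding append_rows_def using A B j by (subst col_four_block_mat(1)[of _ r1 k _ 0 _ r2], auto)
  then show "(transpose_mat (A @\<^sub>r B) *\<^sub>v (a @\<^sub>v b)) $ j = (transpose_mat A *\<^sub>v a + transpose_mat B *\<^sub>v b) $ j"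
    using A B a b j by (simp add: append_rows_def scalar_prod_append[of _ r1 _ r2])
qed

lemma mat_vec_zero0: "(A :: int mat) \<in> carrier_mat r k \<Longrightarrow> A *\<^sub>v 0\<^sub>v k = 0\<^sub>v r"
  by (rule eq_vecI) (auto simp: scalar_prod_def)

lemma prod_list_pos: "\<forall>x\<in>set xs. (x::int) > 0 \<Longrightarrow> prod_list xs > 0"
  by (induction xs) auto

lemma inj_det:
  assumes A: "(A::int mat) \<in> carrier_mat n n" and d: "det A \<noteq> 0"
    and p: "p \<in> carrier_vec n" and q: "q \<in> carrier_vec n"
    and e: "A *\<^sub>v p = A *\<^sub>v q"
  shows "p = q"
proof -
  have "A *\<^sub>v (p - q) = 0\<^sub>v n" using A p q e by (simp add: mult_minus_distrib_mat_vec)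
  hence "p - q = 0\<^sub>v n" using det_0_iff_vec_prod_zero[OF A] d minus_carrier_vec[OF p q] by auto
  note pq = this
  show ?thesis
  proof (rule eq_vecI)
    fix i assume i: "i < dim_vec q"
    hence "(p - q) $ i = 0" using pq q by simp
    thus "p $ i = q $ i" using p q i by simp
  qed (use p q in auto)
qed

lemma rl_app:
  assumes S: "S \<in> carrier_mat m k" and B: "B \<in> carrier_mat r k"
  shows "x \<in> row_lattice (S @\<^sub>r B) \<longleftrightarrow>
    (\<exists>a \<in> carrier_vec m. \<exists>b \<in> carrier_vec r. x = transpose_mat S *\<^sub>v a + transpose_mat B *\<^sub>v b)"
proof
  assume "x \<in> row_lattice (S @\<^sub>r B)"
  then obtain c where c: "c \<in> carrier_vec (m + r)" "x = transpose_mat (S @\<^sub>r B) *\<^sub>v c"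
    using carrier_append_rows[OF S B] by (auto simp: rl_iff)
  have "x = transpose_mat (S @\<^sub>r B) *\<^sub>v (vec_first c m @\<^sub>v vec_last c r)" using c by simp
  also have "\<dots> = transpose_mat S *\<^sub>v vec_first c m + transpose_mat B *\<^sub>v vec_last c r"
    by (rule tr_append_rows_mult[OF S B]) auto
  finally have "x = transpose_mat S *\<^sub>v vec_first c m + transpose_mat B *\<^sub>v vec_last c r" .
  thus "\<exists>a \<in> carrier_vec m. \<exists>b \<in> carrier_vec r. x = transpose_mat S *\<^sub>v a + transpose_mat B *\<^sub>v b"
    using vec_first_carrier vec_last_carrier by blast
next
  assume "\<exists>a \<in> carrier_vec m. \<exists>b \<in> carrier_vec r. x = transpose_mat S *\<^sub>v a + transpose_mat B *\<^sub>v b"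
  then obtain a b where ab: "a \<in> carrier_vec m" "b \<in> carrier_vec r"
     "x = transpose_mat S *\<^sub>v a + transpose_mat B *\<^sub>v b" by blast
  hence "x = transpose_mat (S @\<^sub>r B) *\<^sub>v (a @\<^sub>v b)" using tr_append_rows_mult[OF S B ab(1,2)] by simp
  moreover have "a @\<^sub>v b \<in> carrier_vec (dim_row (S @\<^sub>r B))" using ab carrier_append_rows[OF S B] by auto
  ultimately show "x \<in> row_lattice (S @\<^sub>r B)" by (auto simp: rl_iff)
qed

theorem mainTheorem12:
  fixes S F H T H1b H12 H21 H2b :: "int mat" and m n n1 n2 :: nat
  assumes S: "S \<in> carrier_mat m m" and detS: "det S \<noteq> 0"
    and F: "F \<in> carrier_mat n m"
    and n: "n = n1 + n2"
    and H: "hermite_basis_of_relations H S F"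
    and split: "split_block H n1 n1 = (H1b, H12, H21, H2b)"
    and T: "hermite_basis_of T (S @\<^sub>r mat n2 m (\<lambda>(i,j). F $$ (n1 + i, j)))"
  shows "hermite_basis_of_relations
           (four_block_mat (1\<^sub>m n1) H12 (0\<^sub>m n2 n1) H2b) S
           (four_block_mat H1b (0\<^sub>m n1 n2) (0\<^sub>m n2 n1) (1\<^sub>m n2) * F)
       \<and> hermite_basis_of T
           (S @\<^sub>r (four_block_mat H1b (0\<^sub>m n1 n2) (0\<^sub>m n2 n1) (1\<^sub>m n2) * F))"
proof -
  define H1 where "H1 = four_block_mat H1b (0\<^sub>m n1 n2) (0\<^sub>m n2 n1) (1\<^sub>m n2)"
  define H2 where "H2 = four_block_mat (1\<^sub>m n1) H12 (0\<^sub>m n2 n1) H2b"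
  define A where "A = mat n2 m (\<lambda>(i,j). F $$ (n1 + i, j))"
  define Ft where "Ft = mat n1 m (\<lambda>(i,j). F $$ (i, j))"
  have Hc: "H \<in> carrier_mat n n" and hf: "hermite_form H"
    and HL: "row_lattice H = relations_lattice S F"
    using H F unfolding hermite_basis_of_relations_def by auto
  have ut: "upper_triangular H" and diagpos: "\<And>j. j < n \<Longrightarrow> H $$ (j,j) > 0"
    and offd: "\<And>i j. i < j \<Longrightarrow> j < n \<Longrightarrow> 0 \<le> H $$ (i,j) \<and> H $$ (i,j) < H $$ (j,j)"
    using hf Hc unfolding hermite_form_def by auto
  have low0: "\<And>i j. j < i \<Longrightarrow> i < n \<Longrightarrow> H $$ (i,j) = 0"
    using ut Hc unfolding upper_triangular_def by auto
  have dimH: "dim_row H = n1 + n2" "dim_col H = n1 + n2" using Hc n by auto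
  note sb = split_block[OF split dimH]
  have blocks: "H1b = mat n1 n1 (\<lambda>ij. H $$ ij)" "H12 = mat n1 n2 (\<lambda>(i,j). H $$ (i, j + n1))"
     "H21 = mat n2 n1 (\<lambda>(i,j). H $$ (i + n1, j))" "H2b = mat n2 n2 (\<lambda>(i,j). H $$ (i + n1, j + n1))"
    using split dimH unfolding split_block_def Let_def by auto
  have H21: "H21 = 0\<^sub>m n2 n1" unfolding blocks(3) by (rule eq_matI) (auto simp: low0 n)
  have HH: "H = four_block_mat H1b H12 (0\<^sub>m n2 n1) H2b" using sb(5) H21 by simp
  have H1c: "H1 \<in> carrier_mat n n" unfolding H1_def n using sb by auto
  have H2c: "H2 \<in> carrier_mat n n" unfolding H2_def n using sb by auto
  have HHprod: "H = H2 * H1"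
    unfolding H1_def H2_def HH
    by (subst mult_four_block_mat[OF one_carrier_mat sb(2) zero_carrier_mat sb(4) sb(1)
          zero_carrier_mat zero_carrier_mat one_carrier_mat], insert sb, auto)
  have H2e: "\<And>i j. i < n \<Longrightarrow> j < n \<Longrightarrow>
      H2 $$ (i,j) = (if j < n1 then (if i = j then 1 else 0) else H $$ (i,j))"
    unfolding H2_def blocks using n by auto
  have H1e: "\<And>i j. i < n \<Longrightarrow> j < n \<Longrightarrow>
      H1 $$ (i,j) = (if i < n1 \<and> j < n1 then H $$ (i,j) else if i = j then 1 else 0)"
    unfolding H1_def blocks using n by auto
  have hf2: "hermite_form H2"
    unfolding hermite_form_def upper_triangular_def
    using H2c H2e diagpos offd low0 by auto
  have ut1: "upper_triangular H1"
    unfolding upper_triangular_def using H1c H1e low0 by auto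
  have "det H1 = prod_list (diag_mat H1)" by (rule det_upper_triangular[OF ut1 H1c])
  also have "\<dots> > 0"
    by (rule prod_list_pos) (use H1c H1e diagpos in \<open>auto simp: diag_mat_def\<close>)
  finally have detH1: "det (transpose_mat H1) \<noteq> 0" using det_transpose[OF H1c] by simp
  have H1Tc: "transpose_mat H1 \<in> carrier_mat n n" using H1c by simp
  note inj = inj_det[OF H1Tc detH1]
  have FT: "transpose_mat (H1 * F) = transpose_mat F * transpose_mat H1"
    using transpose_mult[OF H1c F] .
  have HT: "transpose_mat H = transpose_mat H1 * transpose_mat H2"
    using HHprod transpose_mult[OF H2c H1c] by simp
  have RL: "row_lattice H2 = relations_lattice S (H1 * F)"
  proof (intro equalityI subsetI)
    fix p assume "p \<in> row_lattice H2"
    then obtain c where c: "c \<in> carrier_vec n" "p = transpose_mat H2 *\<^sub>v c"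
      using H2c by (auto simp: rl_iff)
    have pc: "p \<in> carrier_vec n" using c H2c by auto
    have "transpose_mat H *\<^sub>v c \<in> row_lattice H" using c Hc by (auto simp: rl_iff)
    hence "transpose_mat F *\<^sub>v (transpose_mat H *\<^sub>v c) \<in> row_lattice S"
      unfolding HL relations_lattice_def by auto
    moreover have "transpose_mat (H1 * F) *\<^sub>v p = transpose_mat F *\<^sub>v (transpose_mat H *\<^sub>v c)"
      unfolding FT HT c(2) using c H1c H2c F by (simp add: assoc_mult_mat_vec)
    ultimately show "p \<in> relations_lattice S (H1 * F)"
      unfolding relations_lattice_def using pc H1c F by auto
  next
    fix p assume p: "p \<in> relations_lattice S (H1 * F)"
    hence pc: "p \<in> carrier_vec n" and pl: "transpose_mat (H1 * F) *\<^sub>v p \<in> row_lattice S"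
      unfolding relations_lattice_def using H1c by auto
    have "transpose_mat F *\<^sub>v (transpose_mat H1 *\<^sub>v p) \<in> row_lattice S"
      using pl unfolding FT using pc H1c F by (simp add: assoc_mult_mat_vec)
    moreover have "transpose_mat H1 *\<^sub>v p \<in> carrier_vec (dim_row F)" using pc H1c F by auto
    ultimately have "transpose_mat H1 *\<^sub>v p \<in> row_lattice H"
      unfolding HL relations_lattice_def by auto
    then obtain c where c: "c \<in> carrier_vec n" "transpose_mat H1 *\<^sub>v p = transpose_mat H *\<^sub>v c"
      using Hc by (auto simp: rl_iff)
    have "transpose_mat H1 *\<^sub>v p = transpose_mat H1 *\<^sub>v (transpose_mat H2 *\<^sub>v c)"
      unfolding c(2) HT using c H1c H2c by (simp add: assoc_mult_mat_vec)
    moreover have "transpose_mat H2 *\<^sub>v c \<in> carrier_vec n" using c H2c by auto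
    ultimately have "p = transpose_mat H2 *\<^sub>v c" using inj[OF pc] by blast
    thus "p \<in> row_lattice H2" using c H2c by (auto simp: rl_iff)
  qed
  have part1: "hermite_basis_of_relations H2 S (H1 * F)"
    unfolding hermite_basis_of_relations_def using H2c hf2 RL H1c F by auto
  have Ftc: "Ft \<in> carrier_mat n1 m" and Ac: "A \<in> carrier_mat n2 m"
    unfolding Ft_def A_def by auto
  have FA: "F = Ft @\<^sub>r A"
    by (rule eq_matI) (use F n in \<open>auto simp: append_rows_def Ft_def A_def\<close>)
  have FTv: "\<And>a b. a \<in> carrier_vec n1 \<Longrightarrow> b \<in> carrier_vec n2 \<Longrightarrow>
      transpose_mat F *\<^sub>v (a @\<^sub>v b) = transpose_mat Ft *\<^sub>v a + transpose_mat A *\<^sub>v b"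
    unfolding FA by (rule tr_append_rows_mult[OF Ftc Ac])
  have H1T: "transpose_mat H1 = four_block_mat (transpose_mat H1b) (0\<^sub>m n1 n2) (0\<^sub>m n2 n1) (1\<^sub>m n2)"
    unfolding H1_def by (subst transpose_four_block_mat[OF sb(1)]) auto
  have H1Tv: "\<And>u v. u \<in> carrier_vec n1 \<Longrightarrow> v \<in> carrier_vec n2 \<Longrightarrow>
      transpose_mat H1 *\<^sub>v (u @\<^sub>v v) = (transpose_mat H1b *\<^sub>v u) @\<^sub>v v"
    unfolding H1T by (subst mult_mat_vec_split) (use sb in auto)
  have HTm: "transpose_mat H = four_block_mat (transpose_mat H1b) (0\<^sub>m n1 n2) (transpose_mat H12) (transpose_mat H2b)"
    unfolding HH by (subst transpose_four_block_mat[OF sb(1) sb(2) zero_carrier_mat sb(4)]) auto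
  have HTv: "\<And>u v. u \<in> carrier_vec n1 \<Longrightarrow> v \<in> carrier_vec n2 \<Longrightarrow>
      transpose_mat H *\<^sub>v (u @\<^sub>v v) = (transpose_mat H1b *\<^sub>v u) @\<^sub>v (transpose_mat H12 *\<^sub>v u + transpose_mat H2b *\<^sub>v v)"
    unfolding HTm by (subst four_block_mat_mult_vec[of _ n1 n1 _ n2 _ n2]) (use sb in auto)
  define G where "G = H1 * F"
  have Gc: "G \<in> carrier_mat n m" unfolding G_def using H1c F by auto
  have GT: "\<And>c. c \<in> carrier_vec n \<Longrightarrow> transpose_mat G *\<^sub>v c = transpose_mat F *\<^sub>v (transpose_mat H1 *\<^sub>v c)"
    unfolding G_def FT using H1c F by (simp add: assoc_mult_mat_vec)
  have LL: "row_lattice (S @\<^sub>r A) = row_lattice (S @\<^sub>r G)"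
  proof (intro equalityI subsetI)
    fix x assume "x \<in> row_lattice (S @\<^sub>r A)"
    then obtain a b where ab: "a \<in> carrier_vec m" "b \<in> carrier_vec n2"
      "x = transpose_mat S *\<^sub>v a + transpose_mat A *\<^sub>v b"
      unfolding rl_app[OF S Ac] by blast
    have c: "0\<^sub>v n1 @\<^sub>v b \<in> carrier_vec n" using ab n by auto
    have "transpose_mat G *\<^sub>v (0\<^sub>v n1 @\<^sub>v b) = transpose_mat A *\<^sub>v b"
      unfolding GT[OF c] using ab sb Ftc Ac by (simp add: H1Tv FTv mat_vec_zero0[of _ n1 n1] mat_vec_zero0[of _ m n1])
    hence "x = transpose_mat S *\<^sub>v a + transpose_mat G *\<^sub>v (0\<^sub>v n1 @\<^sub>v b)" using ab by simp
    thus "x \<in> row_lattice (S @\<^sub>r G)" unfolding rl_app[OF S Gc] using ab c by blast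
  next
    fix x assume "x \<in> row_lattice (S @\<^sub>r G)"
    then obtain a c where ac: "a \<in> carrier_vec m" "c \<in> carrier_vec n"
      "x = transpose_mat S *\<^sub>v a + transpose_mat G *\<^sub>v c"
      unfolding rl_app[OF S Gc] by blast
    define u where "u = vec_first c n1"
    define v where "v = vec_last c n2"
    have uc: "u \<in> carrier_vec n1" and vc: "v \<in> carrier_vec n2" unfolding u_def v_def by auto
    have cuv: "c = u @\<^sub>v v" unfolding u_def v_def using ac n by simp
    define w where "w = transpose_mat H12 *\<^sub>v u"
    have wc: "w \<in> carrier_vec n2" unfolding w_def using sb uc by auto
    define y where "y = transpose_mat H1b *\<^sub>v u"
    have yc: "y \<in> carrier_vec n1" unfolding y_def using sb uc by auto
    have e1: "transpose_mat G *\<^sub>v c = transpose_mat Ft *\<^sub>v y + transpose_mat A *\<^sub>v v"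
    proof -
      have "transpose_mat G *\<^sub>v c = transpose_mat F *\<^sub>v (transpose_mat H1 *\<^sub>v (u @\<^sub>v v))"
        using GT[OF ac(2)] cuv by simp
      also have "\<dots> = transpose_mat Ft *\<^sub>v y + transpose_mat A *\<^sub>v v"
        using uc vc yc by (simp add: H1Tv FTv y_def)
      finally show ?thesis .
    qed
    have z: "u @\<^sub>v 0\<^sub>v n2 \<in> carrier_vec n" using uc n by auto
    have e2': "transpose_mat H *\<^sub>v (u @\<^sub>v 0\<^sub>v n2) = y @\<^sub>v w"
      using HTv[OF uc zero_carrier_vec] sb(1-4) wc unfolding y_def w_def
      by (simp add: mat_vec_zero0[of _ n2 n2])
    have "transpose_mat H *\<^sub>v (u @\<^sub>v 0\<^sub>v n2) \<in> row_lattice H" using z Hc by (auto simp: rl_iff)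
    hence "transpose_mat F *\<^sub>v (y @\<^sub>v w) \<in> row_lattice S"
      unfolding HL relations_lattice_def e2' by auto
    then obtain a' where a': "a' \<in> carrier_vec m"
      "transpose_mat Ft *\<^sub>v y + transpose_mat A *\<^sub>v w = transpose_mat S *\<^sub>v a'"
      unfolding FTv[OF yc wc] using S by (auto simp: rl_iff)
    have "x = transpose_mat S *\<^sub>v (a + a') + transpose_mat A *\<^sub>v (v - w)"
    proof (rule eq_vecI)
      fix j assume j: "j < dim_vec (transpose_mat S *\<^sub>v (a + a') + transpose_mat A *\<^sub>v (v - w))"
      hence jm: "j < m" using S Ac by simp
      have 1: "x $ j = (transpose_mat S *\<^sub>v a) $ j + (transpose_mat Ft *\<^sub>v y) $ j + (transpose_mat A *\<^sub>v v) $ j"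
        using ac(3) e1 jm S Ftc Ac by simp
      have 2: "(transpose_mat Ft *\<^sub>v y) $ j + (transpose_mat A *\<^sub>v w) $ j = (transpose_mat S *\<^sub>v a') $ j"
        using arg_cong[OF a'(2), of "\<lambda>z. z $ j"] jm Ftc Ac by simp
      have 3: "(transpose_mat S *\<^sub>v (a + a')) $ j = (transpose_mat S *\<^sub>v a) $ j + (transpose_mat S *\<^sub>v a') $ j"
        using ac(1) a'(1) S jm by (simp add: mult_add_distrib_mat_vec[of _ m m])
      have 4: "(transpose_mat A *\<^sub>v (v - w)) $ j = (transpose_mat A *\<^sub>v v) $ j - (transpose_mat A *\<^sub>v w) $ j"
        using vc wc Ac jm by (simp add: mult_minus_distrib_mat_vec[of _ m n2])
      show "x $ j = (transpose_mat S *\<^sub>v (a + a') + transpose_mat A *\<^sub>v (v - w)) $ j"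
        using 1 2 3 4 jm S Ac by simp
    qed (use ac S Gc Ac in simp)
    moreover have "a + a' \<in> carrier_vec m" "v - w \<in> carrier_vec n2" using ac(1) a'(1) vc wc by auto
    ultimately show "x \<in> row_lattice (S @\<^sub>r A)" unfolding rl_app[OF S Ac] by blast
  qed
  have dc: "dim_col (S @\<^sub>r A) = m" "dim_col (S @\<^sub>r G) = m"
    using carrier_append_rows[OF S Ac] carrier_append_rows[OF S Gc] by auto
  have part2: "hermite_basis_of T (S @\<^sub>r G)"
    using T LL dc unfolding hermite_basis_of_def A_def[symmetric] by auto
  show ?thesis using part1 part2 unfolding H1_def H2_def G_def by simp
qed

end
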